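(* Let $(F_n)_{n\ge1}$ be a sequence of probability distribution functions on $\mathbb{R}$, and let $X$ denote a random variable with distribution $F_n$. Assume: (i) $0<F_n(0)$ for all $n$ and $F_n(0)\to0$; (ii) $\mu_n:=\mathbb{E}_{F_n}[X]\ge\mu$ for all $n$, for some constant $\mu>0$; (iii) there are constants $C,K,M<\infty$ such that for every $n$: $\mathbb{E}_{F_n}[X^2]\le C$, $\mathbb{E}_{F_n}[X^2\mid X\le0]\le K$, and $F_n(x+t)-F_n(x)\le Mt$ for all $x\ge0$, $t>0$. Define $G_n(y)=\int_{-\infty}^{y}(x^2-yx)\,dF_n(x)$ and let $y_n^*\ge0$ be the (unique) zero of $G_n$ in $[0,\infty)$. Then $$F_n(y_n^* )\le F_n(0)+\Theta^{1/3}F_n(0)^{1/3},\qquad \Theta=27\Big(K+\frac{C\sqrt K}{\mu}\Big)M^2,$$ so in particular $F_n(y_n^* )=O(F_n(0)^{1/3})\to0$ as $n\to\infty$. *)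

theory Defs
  imports "HOL-Probability.Probability"
begin

definition G_fun :: "real measure \<Rightarrow> real \<Rightarrow> real" where
  "G_fun M y = (LINT x:{..y}|M. x\<^sup>2 - y * x)"

definition cond_second_moment_nonpos :: "real measure \<Rightarrow> real" where
  "cond_second_moment_nonpos M = (LINT x:{..0}|M. x\<^sup>2) / cdf M 0"

end

theory Submission imports Defs begin

lemma per_n:
  fixes D :: "real measure" and \<mu> C K M y :: real
  assumes distr: "real_distribution D"
    and p_pos: "0 < cdf D 0"
    and mu_pos: "\<mu> > 0"
    and sq_int: "integrable D (\<lambda>x. x\<^sup>2)"
    and mean_ge: "(\<integral>x. x \<partial>D) \<ge> \<mu>"
    and second_le: "(\<integral>x. x\<^sup>2 \<partial>D) \<le> C"
    and cond_le: "cond_second_moment_nonpos D \<le> K"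
    and lip: "\<And>x t. x \<ge> 0 \<Longrightarrow> t > 0 \<Longrightarrow> cdf D (x + t) - cdf D x \<le> M * t"
    and y_nonneg: "y \<ge> 0"
    and y_zero: "G_fun D y = 0"
  shows "(cdf D y - cdf D 0)^3 \<le> 27 * (K + C * sqrt K / \<mu>) * M\<^sup>2 * cdf D 0"
proof -
  interpret real_distribution D by (rule distr)
  define p where "p = cdf D 0"
  define q where "q = cdf D y - cdf D 0"
  have [measurable]: "(\<lambda>x::real. x) \<in> borel_measurable D" by simp
  have int_x: "integrable D (\<lambda>x. x)"
    by (rule square_integrable_imp_integrable) (auto simp: sq_int)
  have intI: "integrable D (\<lambda>x. indicator A x * f x)"
    if "A \<in> sets borel" "integrable D f" for A and f :: "real \<Rightarrow> real"
    using integrable_mult_indicator[of A D f] that by simp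
  have int_yx: "integrable D (\<lambda>x. x\<^sup>2 - y * x)" using int_x sq_int by auto
  define S where "S = (\<integral>x. indicator {..0} x * x\<^sup>2 \<partial>D)"
  define T where "T = (\<integral>x. indicator {..0} x * (- x) \<partial>D)"
  define L where "L = (\<integral>x. indicator {0<..y} x * (x * (y - x)) \<partial>D)"
  have G_eq: "(\<integral>x. indicator {..y} x * (x\<^sup>2 - y * x) \<partial>D) = 0"
    using y_zero unfolding G_fun_def set_lebesgue_integral_def by simp
  have A: "y * \<mu> \<le> C"
  proof -
    have "(\<integral>x. y * x - x\<^sup>2 \<partial>D) \<le> (\<integral>x. indicator {..y} x * (y * x - x\<^sup>2) \<partial>D)"
    proof (rule integral_mono)
      show "integrable D (\<lambda>x. y * x - x\<^sup>2)" using int_x sq_int by auto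
      show "integrable D (\<lambda>x. indicator {..y} x * (y * x - x\<^sup>2))"
        by (rule intI) (use int_x sq_int in auto)
      fix x :: real
      show "y * x - x\<^sup>2 \<le> indicator {..y} x * (y * x - x\<^sup>2)"
      proof (cases "x \<le> y")
        case False
        then have "x * (y - x) \<le> 0" using y_nonneg by (intro mult_nonneg_nonpos) auto
        then show ?thesis using False by (simp add: algebra_simps power2_eq_square)
      qed simp
    qed
    also have "\<dots> = - (\<integral>x. indicator {..y} x * (x\<^sup>2 - y * x) \<partial>D)"
      by (subst integral_minus[symmetric]) (simp add: algebra_simps)
    also have "\<dots> = 0" using G_eq by simp
    finally have "(\<integral>x. y * x - x\<^sup>2 \<partial>D) \<le> 0" .
    moreover have "(\<integral>x. y * x - x\<^sup>2 \<partial>D) = y * (\<integral>x. x \<partial>D) - (\<integral>x. x\<^sup>2 \<partial>D)"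
      using int_x sq_int by simp
    ultimately have "y * (\<integral>x. x \<partial>D) \<le> C" using second_le by linarith
    moreover have "y * \<mu> \<le> y * (\<integral>x. x \<partial>D)" using mean_ge y_nonneg by (simp add: mult_left_mono)
    ultimately show ?thesis by linarith
  qed
  have Ssplit: "(\<integral>x. indicator {..y} x * (x\<^sup>2 - y * x) \<partial>D)
      = (\<integral>x. indicator {..0} x * x\<^sup>2 \<partial>D) + y * (\<integral>x. indicator {..0} x * (- x) \<partial>D)
        - (\<integral>x. indicator {0<..y} x * (x * (y - x)) \<partial>D)"
  proof -
    have "(\<integral>x. indicator {..y} x * (x\<^sup>2 - y * x) \<partial>D)
        = (\<integral>x. indicator {..0} x * x\<^sup>2 + y * (indicator {..0} x * (- x))
            - indicator {0<..y} x * (x * (y - x)) \<partial>D)"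
      using y_nonneg by (intro Bochner_Integration.integral_cong refl)
        (auto simp: indicator_def algebra_simps power2_eq_square)
    also have "\<dots> = (\<integral>x. indicator {..0} x * x\<^sup>2 \<partial>D) + y * (\<integral>x. indicator {..0} x * (- x) \<partial>D)
        - (\<integral>x. indicator {0<..y} x * (x * (y - x)) \<partial>D)"
    proof -
      have i1: "integrable D (\<lambda>x. indicator {..0} x * x\<^sup>2)" by (rule intI) (auto simp: sq_int)
      have i2: "integrable D (\<lambda>x. indicator {..0} x * (- x))" by (rule intI) (use int_x in auto)
      have i3: "integrable D (\<lambda>x. indicator {0<..y} x * (x * (y - x)))"
        by (rule intI) (use int_x sq_int in \<open>auto simp: algebra_simps power2_eq_square[symmetric]\<close>)
      show ?thesis using i1 i2 i3 by simp
    qed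
    finally show ?thesis .
  qed
  have LST: "L = S + y * T" using Ssplit G_eq unfolding L_def S_def T_def by linarith
  have S_le: "S \<le> K * p"
  proof -
    have "S / p \<le> K" using cond_le unfolding cond_second_moment_nonpos_def S_def p_def
        set_lebesgue_integral_def by simp
    then show ?thesis using p_pos unfolding p_def by (simp add: divide_le_eq)
  qed
  have S_nonneg: "S \<ge> 0" unfolding S_def by (intro integral_nonneg_AE) (auto simp: indicator_def)
  have T_nonneg: "T \<ge> 0" unfolding T_def by (intro integral_nonneg_AE) (auto simp: indicator_def)
  have T_eps: "T \<le> S / (2 * s) + s * p / 2" if s: "s > 0" for s
  proof -
    have "T \<le> (\<integral>x. indicator {..0} x * x\<^sup>2 / (2 * s) + indicator {..0} x * (s / 2) \<partial>D)"
      unfolding T_def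
    proof (rule integral_mono)
      show "integrable D (\<lambda>x. indicator {..0} x * (- x))" by (rule intI) (use int_x in auto)
      show "integrable D (\<lambda>x. indicator {..0} x * x\<^sup>2 / (2 * s) + indicator {..0} x * (s / 2))"
        using intI[of "{..0}" "\<lambda>x. x\<^sup>2"] sq_int intI[of "{..0}" "\<lambda>_. s / 2"] by simp
      fix x :: real
      have "0 \<le> (x + s)\<^sup>2" by simp
      then have "- x \<le> x\<^sup>2 / (2 * s) + s / 2" using s
        by (simp add: field_simps power2_eq_square)
      then show "indicator {..0} x * (- x) \<le> indicator {..0} x * x\<^sup>2 / (2 * s) + indicator {..0} x * (s / 2)"
        by (auto simp: indicator_def)
    qed
    also have "\<dots> = S / (2 * s) + s * p / 2"
      using intI[of "{..0}" "\<lambda>x. x\<^sup>2"] sq_int intI[of "{..0}" "\<lambda>_. s / 2"] unfolding S_def p_def cdf_def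
      by simp
    finally show ?thesis .
  qed
  have T_le: "T \<le> sqrt K * p"
  proof (cases "K > 0")
    case True
    have "T \<le> S / (2 * sqrt K) + sqrt K * p / 2" using T_eps True by simp
    also have "\<dots> \<le> K * p / (2 * sqrt K) + sqrt K * p / 2"
      using S_le True by (simp add: divide_right_mono)
    also have "K * p / (2 * sqrt K) = sqrt K * p / 2"
      using True by (simp add: field_simps)
    finally show ?thesis by (simp add: mult.commute)
  next
    case False
    then have "S = 0" using S_le S_nonneg p_pos unfolding p_def
      using mult_nonpos_nonneg[of K "cdf D 0"] by linarith
    have "T \<le> 0 + e" if "e > 0" for e
      using T_eps[of "2 * e / p"] that p_pos \<open>S = 0\<close> unfolding p_def by simp
    then have "T \<le> 0" by (rule field_le_epsilon)
    moreover have "K = 0" using False S_le S_nonneg p_pos unfolding p_def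
      by (smt (verit) mult_neg_pos)
    ultimately show ?thesis by simp
  qed
  have q_nonneg: "q \<ge> 0" unfolding q_def using y_nonneg by (simp add: cdf_nondecreasing)
  have L_nonneg: "L \<ge> 0" unfolding L_def by (intro integral_nonneg_AE) (auto simp: indicator_def)
  have M_nonneg: "M \<ge> 0" using lip[of 0 1] cdf_nondecreasing[of 0 1] by simp
  have q_le: "q \<le> M * y"
  proof (cases "y > 0")
    case True then show ?thesis using lip[of 0 y] unfolding q_def by simp
  next
    case False then show ?thesis using y_nonneg unfolding q_def by simp
  qed
  have key: "2 * q ^ 3 \<le> 27 * M\<^sup>2 * L"
  proof (cases "q > 0")
    case False
    then have "q = 0" using q_nonneg by simp
    then show ?thesis using L_nonneg by simp
  next
    case True
    have ypos: "y > 0" using True q_le M_nonneg y_nonneg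
      by (metis mult_zero_right order_less_le_trans order_le_less)
    have Mpos: "M > 0" using True q_le M_nonneg y_nonneg
      by (metis mult_zero_left order_less_le_trans order_le_less)
    define a where "a = q / (3 * M)"
    have apos: "a > 0" unfolding a_def using True Mpos by simp
    have Ma: "M * a = q / 3" unfolding a_def using Mpos by simp
    have a3: "3 * a \<le> y" using q_le Mpos unfolding a_def by (simp add: field_simps)
    have h1: "cdf D a - cdf D 0 \<le> q / 3" using lip[of 0 a] apos Ma by simp
    have h2: "cdf D y - cdf D (y - a) \<le> q / 3" using lip[of "y - a" a] apos Ma a3 by simp
    have meas: "measure D {a<..y - a} = cdf D (y - a) - cdf D a"
      using cdf_diff_eq[of a "y - a"] apos a3 by simp
    have meas_ge: "measure D {a<..y - a} \<ge> q / 3" using h1 h2 unfolding meas q_def by (simp add: field_simps)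
    have "(\<integral>x. indicator {a<..y - a} x * (a * (y - a)) \<partial>D) \<le> L"
      unfolding L_def
    proof (rule integral_mono)
      show "integrable D (\<lambda>x. indicator {a<..y - a} x * (a * (y - a)))"
        by (rule intI) auto
      show "integrable D (\<lambda>x. indicator {0<..y} x * (x * (y - x)))"
        by (rule intI) (use int_x sq_int in \<open>auto simp: algebra_simps power2_eq_square[symmetric]\<close>)
      fix x :: real
      show "indicator {a<..y - a} x * (a * (y - a)) \<le> indicator {0<..y} x * (x * (y - x))"
      proof (cases "x \<in> {a<..y - a}")
        case True
        then have "0 \<le> (x - a) * (y - a - x)" by (intro mult_nonneg_nonneg) auto
        then have "a * (y - a) \<le> x * (y - x)" by (simp add: algebra_simps)
        moreover have "x \<in> {0<..y}" using True apos by auto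
        ultimately show ?thesis using True by simp
      next
        case False
        then show ?thesis by (auto simp: indicator_def intro: mult_nonneg_nonneg)
      qed
    qed
    moreover have "(\<integral>x. indicator {a<..y - a} x * (a * (y - a)) \<partial>D) = a * (y - a) * measure D {a<..y - a}"
      by simp
    moreover have "a * (y - a) * (q / 3) \<le> a * (y - a) * measure D {a<..y - a}"
      by (rule mult_left_mono[OF meas_ge]) (use apos a3 in simp)
    ultimately have La: "a * (y - a) * (q / 3) \<le> L" by linarith
    have "M * (2 * a) \<le> M * (y - a)" by (rule mult_left_mono) (use a3 Mpos in auto)
    then have My: "M * (y - a) \<ge> 2 * q / 3" using Ma by (simp add: field_simps)
    have e1: "27 * M\<^sup>2 * (a * (y - a) * (q / 3)) = 3 * q\<^sup>2 * (M * (y - a))"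
      unfolding a_def using Mpos by (simp add: field_simps power2_eq_square)
    have e2: "3 * q\<^sup>2 * (2 * q / 3) \<le> 3 * q\<^sup>2 * (M * (y - a))"
      by (rule mult_left_mono[OF My]) simp
    have e3: "3 * q\<^sup>2 * (2 * q / 3) = 2 * q ^ 3" by (simp add: power2_eq_square power3_eq_cube)
    have "2 * q ^ 3 \<le> 27 * M\<^sup>2 * (a * (y - a) * (q / 3))" using e1 e2 e3 by linarith
    also have "\<dots> \<le> 27 * M\<^sup>2 * L" by (rule mult_left_mono[OF La]) simp
    finally show ?thesis .
  qed
  have yle: "y \<le> C / \<mu>" using A mu_pos by (simp add: field_simps)
  have C_nonneg: "C / \<mu> \<ge> 0" using yle y_nonneg by linarith
  have "y * T \<le> C / \<mu> * (sqrt K * p)"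
    using mult_mono[OF yle T_le C_nonneg T_nonneg] .
  then have SyT: "L \<le> (K + C * sqrt K / \<mu>) * p" using LST S_le by (simp add: algebra_simps)
  have Kp_nonneg: "0 \<le> (K + C * sqrt K / \<mu>) * p" using SyT L_nonneg by linarith
  have "2 * q ^ 3 \<le> 27 * M\<^sup>2 * ((K + C * sqrt K / \<mu>) * p)"
  proof -
    have "27 * M\<^sup>2 * L \<le> 27 * M\<^sup>2 * ((K + C * sqrt K / \<mu>) * p)"
      by (rule mult_left_mono[OF SyT]) simp
    then show ?thesis using key by linarith
  qed
  moreover have "0 \<le> 27 * M\<^sup>2 * ((K + C * sqrt K / \<mu>) * p)" using Kp_nonneg by simp
  ultimately have "q ^ 3 \<le> 27 * M\<^sup>2 * ((K + C * sqrt K / \<mu>) * p)"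
    using zero_le_power[OF q_nonneg, of 3] by linarith
  then show ?thesis unfolding q_def p_def by (simp add: algebra_simps)
qed

lemma cube_le_powr:
  fixes q X :: real
  assumes "q \<ge> 0" "q ^ 3 \<le> X"
  shows "q \<le> X powr (1/3)"
proof -
  have "q ^ 3 = q powr (real 3)" using assms(1) by (subst powr_realpow') auto
  then have "(q ^ 3) powr (1/3) = q powr (real 3 * (1/3))" by (simp only: powr_powr)
  also have "\<dots> = q" using assms(1) by (simp add: powr_one)
  finally have "q = (q ^ 3) powr (1/3)" by simp
  also have "\<dots> \<le> X powr (1/3)" by (rule powr_mono2) (use assms in auto)
  finally show ?thesis .
qed

theorem theorem3:
  fixes P :: "nat \<Rightarrow> real measure"
    and \<mu> C K M :: real
    and ystar :: "nat \<Rightarrow> real"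
  assumes distr: "\<And>n. real_distribution (P n)"
    and F0_pos: "\<And>n. 0 < cdf (P n) 0"
    and F0_lim: "(\<lambda>n. cdf (P n) 0) \<longlonglongrightarrow> 0"
    and mu_pos: "\<mu> > 0"
    and sq_int: "\<And>n. integrable (P n) (\<lambda>x. x\<^sup>2)"
    and mean_ge: "\<And>n. (\<integral>x. x \<partial>P n) \<ge> \<mu>"
    and second_le: "\<And>n. (\<integral>x. x\<^sup>2 \<partial>P n) \<le> C"
    and cond_le: "\<And>n. cond_second_moment_nonpos (P n) \<le> K"
    and lip: "\<And>n x t. x \<ge> 0 \<Longrightarrow> t > 0 \<Longrightarrow> cdf (P n) (x + t) - cdf (P n) x \<le> M * t"
    and ystar_nonneg: "\<And>n. ystar n \<ge> 0"
    and ystar_zero: "\<And>n. G_fun (P n) (ystar n) = 0"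
  shows "(\<forall>n. cdf (P n) (ystar n) \<le> cdf (P n) 0
              + (27 * (K + C * sqrt K / \<mu>) * M\<^sup>2) powr (1/3) * (cdf (P n) 0) powr (1/3))
         \<and> (\<lambda>n. cdf (P n) (ystar n)) \<longlonglongrightarrow> 0"
proof -
  define \<Theta> where "\<Theta> = 27 * (K + C * sqrt K / \<mu>) * M\<^sup>2"
  have bound: "cdf (P n) (ystar n) \<le> cdf (P n) 0 + \<Theta> powr (1/3) * (cdf (P n) 0) powr (1/3)" for n
  proof -
    interpret real_distribution "P n" by (rule distr)
    define q where "q = cdf (P n) (ystar n) - cdf (P n) 0"
    have q3: "q ^ 3 \<le> \<Theta> * cdf (P n) 0"
      unfolding q_def \<Theta>_def
      by (rule per_n[OF distr F0_pos mu_pos sq_int mean_ge second_le cond_le lip ystar_nonneg ystar_zero])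
    have q0: "q \<ge> 0" unfolding q_def using ystar_nonneg[of n] by (simp add: cdf_nondecreasing)
    have "0 \<le> \<Theta> * cdf (P n) 0" using q3 zero_le_power[OF q0, of 3] by linarith
    then have Th: "\<Theta> \<ge> 0" using F0_pos[of n] by (simp add: zero_le_mult_iff)
    have "q \<le> (\<Theta> * cdf (P n) 0) powr (1/3)" by (rule cube_le_powr[OF q0 q3])
    also have "\<dots> = \<Theta> powr (1/3) * (cdf (P n) 0) powr (1/3)" by (rule powr_mult)
    finally show ?thesis unfolding q_def by simp
  qed
  have lim: "(\<lambda>n. cdf (P n) 0 + \<Theta> powr (1/3) * (cdf (P n) 0) powr (1/3)) \<longlonglongrightarrow> 0 + \<Theta> powr (1/3) * 0 powr (1/3)"
    by (intro tendsto_intros F0_lim tendsto_powr2) (use F0_pos in \<open>auto intro!: always_eventually less_imp_le\<close>)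
  have "(\<lambda>n. cdf (P n) (ystar n)) \<longlonglongrightarrow> 0"
  proof (rule tendsto_sandwich[of "\<lambda>_. 0" _ _ "\<lambda>n. cdf (P n) 0 + \<Theta> powr (1/3) * (cdf (P n) 0) powr (1/3)"])
    show "\<forall>\<^sub>F n in sequentially. 0 \<le> cdf (P n) (ystar n)"
      by (simp add: cdf_def)
    show "\<forall>\<^sub>F n in sequentially. cdf (P n) (ystar n) \<le> cdf (P n) 0 + \<Theta> powr (1/3) * (cdf (P n) 0) powr (1/3)"
      using bound by simp
    show "(\<lambda>n. cdf (P n) 0 + \<Theta> powr (1/3) * (cdf (P n) 0) powr (1/3)) \<longlonglongrightarrow> 0"
      using lim by simp
  qed simp
  then show ?thesis using bound unfolding \<Theta>_def by blast
qed
end
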